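(* There exists $c>0$ such that for every even $n$, the number $a_n$ of squared walks of length $n$ satisfies $a_n\ge\mu^n e^{-c\sqrt n}$.
   Context: Work on $\mathbb Z^2$ with nearest-neighbour edges. A self-avoiding walk is a nearest-neighbour path $\gamma_0,\dots,\gamma_n$ visiting no vertex twice; $n$ is its length. $\mu=\lim_n c_n^{1/n}$ is the connective constant, $c_n$ being the number of $n$-step self-avoiding walks from the origin. A squared walk (of span $k$) of length $n$ is an $n$-step self-avoiding walk with $\gamma_0=(0,0)$, $\gamma_n=(k,k)$ and all its vertices in $[0,k]^2$, for some integer $k\ge0$; $a_n$ counts squared walks of length $n$ over all spans $k$. *)

theory Defs
  imports Complex_Main
begin

type_synonym pt = "int \<times> int"

definition adjacent :: "pt \<Rightarrow> pt \<Rightarrow> bool" where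
  "adjacent p q \<longleftrightarrow> \<bar>fst p - fst q\<bar> + \<bar>snd p - snd q\<bar> = 1"

definition saw :: "nat \<Rightarrow> pt list \<Rightarrow> bool" where
  "saw n w \<longleftrightarrow> length w = n + 1 \<and> w ! 0 = (0, 0) \<and> distinct w \<and>
     (\<forall>i<n. adjacent (w ! i) (w ! Suc i))"

definition c_num :: "nat \<Rightarrow> nat" where
  "c_num n = card {w. saw n w}"

definition conn_const :: real where
  "conn_const = lim (\<lambda>n. root n (real (c_num n)))"

definition squared_walk :: "nat \<Rightarrow> pt list \<Rightarrow> bool" where
  "squared_walk n w \<longleftrightarrow> saw n w \<and>
     (\<exists>k::int. k \<ge> 0 \<and> w ! n = (k, k) \<and>
        (\<forall>p\<in>set w. 0 \<le> fst p \<and> fst p \<le> k \<and> 0 \<le> snd p \<and> snd p \<le> k))"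

definition a_num :: "nat \<Rightarrow> nat" where
  "a_num n = card {w. squared_walk n w}"

end

theory Submission
  imports Defs
begin


lemma saw_alt: "saw n w \<longleftrightarrow> length w = n + 1 \<and> w ! 0 = (0,0) \<and> distinct w \<and> successively adjacent w"
  unfolding saw_def successively_conv_nth by auto

lemma adjacent_sym: "adjacent p q \<Longrightarrow> adjacent q p"
  unfolding adjacent_def by linarith

lemma saw_bound:
  assumes "saw n w" "i \<le> n"
  shows "\<bar>fst (w!i)\<bar> + \<bar>snd (w!i)\<bar> \<le> int i"
  using assms(2)
proof (induction i)
  case 0
  then show ?case using assms(1) by (simp add: saw_def)
next
  case (Suc i)
  then have "adjacent (w!i) (w!Suc i)" using assms(1) by (simp add: saw_def)
  then show ?case using Suc by (auto simp: adjacent_def)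
qed

lemma finite_saw: "finite {w. saw n w}"
proof -
  let ?B = "{-int n..int n} \<times> {-int n..int n}"
  have "{w. saw n w} \<subseteq> {w. set w \<subseteq> ?B \<and> length w = n + 1}"
  proof clarify
    fix w assume s: "saw n w"
    then have len: "length w = n+1" by (simp add: saw_def)
    show "set w \<subseteq> ?B \<and> length w = n + 1"
    proof (intro conjI subsetI len)
      fix p assume "p \<in> set w"
      then obtain i where i: "i < length w" "p = w!i" by (auto simp: in_set_conv_nth)
      then have "\<bar>fst p\<bar> + \<bar>snd p\<bar> \<le> int i" using saw_bound[OF s, of i] len by auto
      moreover have "int i \<le> int n" using i len by auto
      ultimately show "p \<in> ?B" using i by (cases "w!i") (auto simp: mem_Times_iff)
    qed
  qed
  moreover have "finite {w. set w \<subseteq> ?B \<and> length w = n + 1}"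
    by (rule finite_lists_length_eq) simp
  ultimately show ?thesis by (rule finite_subset)
qed


definition sh :: "pt \<Rightarrow> pt \<Rightarrow> pt" where "sh a p = (fst p + fst a, snd p + snd a)"
definition unsh :: "pt \<Rightarrow> pt \<Rightarrow> pt" where "unsh a p = (fst p - fst a, snd p - snd a)"

lemma unsh_sh[simp]: "unsh a (sh a p) = p" "sh a (unsh a p) = p"
  by (auto simp: sh_def unsh_def)
lemma unsh_self[simp]: "unsh a a = (0,0)" by (simp add: unsh_def)
lemma inj_unsh: "inj (unsh a)" by (metis injI unsh_sh(2))
lemma inj_sh: "inj (sh a)" by (metis injI unsh_sh(1))
lemma adjacent_unsh[simp]: "adjacent (unsh a p) (unsh a q) = adjacent p q"
  by (simp add: adjacent_def unsh_def)
lemma adjacent_sh[simp]: "adjacent (sh a p) (sh a q) = adjacent p q"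
  by (simp add: adjacent_def sh_def)

lemma submult: "c_num (m + n) \<le> c_num m * c_num n"
proof -
  define f where "f w = (take (m+1) w, map (unsh (w!m)) (drop m w))" for w :: "pt list"
  have inj: "inj_on f {w. saw (m+n) w}"
  proof (rule inj_onI)
    fix w v assume w: "w \<in> {w. saw (m+n) w}" and v: "v \<in> {w. saw (m+n) w}" and e: "f w = f v"
    from e have t: "take (m+1) w = take (m+1) v" and d: "map (unsh (w!m)) (drop m w) = map (unsh (v!m)) (drop m v)"
      by (auto simp: f_def)
    have lw: "length w = m+n+1" and lv: "length v = m+n+1" using w v by (auto simp: saw_def)
    have "w!m = v!m" using t lw lv by (metis Suc_eq_plus1 lessI nth_take)
    then have "drop m w = drop m v" using d inj_unsh by (metis inj_map_eq_map)
    moreover have "take m w = take m v"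
    proof -
      have "take m w = take m (take (m+1) w)" by simp
      also have "\<dots> = take m (take (m+1) v)" using t by simp
      finally show ?thesis by simp
    qed
    ultimately show "w = v" by (metis append_take_drop_id)
  qed
  have img: "f ` {w. saw (m+n) w} \<subseteq> {w. saw m w} \<times> {w. saw n w}"
  proof (rule image_subsetI)
    fix w assume "w \<in> {w. saw (m+n) w}"
    then have s: "saw (m+n) w" by simp
    then have lw: "length w = m+n+1" and w0: "w!0 = (0,0)" and dw: "distinct w"
      and aw: "\<forall>i<m+n. adjacent (w!i) (w!Suc i)" by (auto simp: saw_def)
    have "saw m (take (m+1) w)" unfolding saw_def using lw w0 dw aw by auto
    moreover have "saw n (map (unsh (w!m)) (drop m w))" unfolding saw_def
      using lw dw aw by (auto simp: distinct_map inj_on_subset[OF inj_unsh])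
    ultimately show "f w \<in> {w. saw m w} \<times> {w. saw n w}" by (simp add: f_def)
  qed
  have "c_num (m+n) = card (f ` {w. saw (m+n) w})" unfolding c_num_def
    using card_image[OF inj] by simp
  also have "\<dots> \<le> card ({w. saw m w} \<times> {w. saw n w})"
    by (rule card_mono[OF _ img]) (simp add: finite_saw)
  also have "\<dots> = c_num m * c_num n" by (simp add: card_cartesian_product c_num_def)
  finally show ?thesis .
qed

lemma c_num_pos: "c_num n \<ge> 1"
proof -
  have "saw n (map (\<lambda>i. (int i, 0)) [0..<n+1])"
    unfolding saw_def by (auto simp: distinct_map inj_on_def adjacent_def simp del: upt_Suc)
  then have "{w. saw n w} \<noteq> {}" by blast
  then show ?thesis unfolding c_num_def using finite_saw
    by (metis One_nat_def Suc_leI card_gt_0_iff)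
qed

lemma c_num_0: "c_num 0 = 1"
proof -
  have "{w. saw 0 w} = {[(0,0)]}"
    by (auto simp: saw_def length_Suc_conv)
  then show ?thesis by (simp add: c_num_def)
qed

lemma submult_pow: "c_num (k*q) \<le> c_num k ^ q"
proof (induction q)
  case 0 then show ?case by (simp add: c_num_0)
next
  case (Suc q)
  have "c_num (k*Suc q) = c_num (k + k*q)" by simp
  also have "\<dots> \<le> c_num k * c_num (k*q)" by (rule submult)
  also have "\<dots> \<le> c_num k * c_num k ^ q" using Suc by simp
  finally show ?case by simp
qed


definition sq :: "nat \<Rightarrow> real" where "sq n = root n (real (c_num n))"

lemma sq_ge1: "n \<ge> 1 \<Longrightarrow> sq n \<ge> 1"
  unfolding sq_def using c_num_pos[of n] by simp

lemma sq_key: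
  assumes k: "k \<ge> 1" and n: "n \<ge> 1"
  shows "sq n \<le> sq k * root n (real (Max (c_num ` {..<k})))"
proof -
  define C where "C = Max (c_num ` {..<k})"
  define q where "q = n div k"
  define r where "r = n mod k"
  have nqr: "n = k*q + r" by (simp add: q_def r_def)
  have rk: "r < k" using k by (simp add: r_def)
  have Cr: "c_num r \<le> C" unfolding C_def using rk by auto
  have "c_num n \<le> c_num (k*q) * c_num r" using submult[of "k*q" r] nqr by simp
  also have "\<dots> \<le> c_num k ^ q * C" using submult_pow[of k q] Cr by (simp add: mult_mono)
  finally have "real (c_num n) \<le> real (c_num k) ^ q * real C"
    by (metis of_nat_le_iff of_nat_mult of_nat_power)
  moreover have "real (c_num k) = sq k ^ k" unfolding sq_def using k
    by (simp add: real_root_pow_pos2)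
  ultimately have "real (c_num n) \<le> sq k ^ (k*q) * real C" by (simp add: power_mult)
  also have "\<dots> \<le> sq k ^ n * real C"
  proof (rule mult_right_mono)
    show "sq k ^ (k*q) \<le> sq k ^ n" using sq_ge1[OF k] nqr by (intro power_increasing) auto
  qed simp
  finally have "root n (real (c_num n)) \<le> root n (sq k ^ n * real C)"
    using n by (subst real_root_le_iff) auto
  also have "\<dots> = sq k * root n (real C)"
    using n sq_ge1[OF k] by (simp add: real_root_mult real_root_power_cancel)
  finally show ?thesis unfolding sq_def C_def by simp
qed

lemma conv: "sq \<longlonglongrightarrow> Inf (sq ` {1..})" and inf_le: "m \<ge> 1 \<Longrightarrow> Inf (sq ` {1..}) \<le> sq m"
   and inf_ge: "Inf (sq ` {1..}) \<ge> 1"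
proof -
  let ?L = "Inf (sq ` {1..})"
  have bdd: "bdd_below (sq ` {1..})" using sq_ge1 by (auto intro!: bdd_belowI[of _ 1])
  show lo: "m \<ge> 1 \<Longrightarrow> ?L \<le> sq m" for m using bdd by (auto intro!: cInf_lower)
  show "?L \<ge> 1" using sq_ge1 by (auto intro!: cInf_greatest)
  show "sq \<longlonglongrightarrow> ?L"
  proof (rule LIMSEQ_I)
    fix e :: real assume e: "e > 0"
    have "?L < ?L + e/2" using e by simp
    then obtain k where k: "k \<ge> 1" "sq k < ?L + e/2"
      using cInf_lessD[of "sq ` {1..}" "?L + e/2"] by auto
    define C where "C = Max (c_num ` {..<k})"
    have "c_num 0 \<le> C" unfolding C_def using k by (intro Max_ge) auto
    then have C: "real C > 0" using c_num_0 by simp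
    have sk: "sq k \<ge> 1" using sq_ge1 k by simp
    define d where "d = e / (2 * sq k)"
    have d: "d > 0" using e sk by (simp add: d_def)
    from LIMSEQ_D[OF LIMSEQ_root_const[OF C] d] obtain N where
      N: "\<And>n. n \<ge> N \<Longrightarrow> norm (root n (real C) - 1) < d" by blast
    show "\<exists>no. \<forall>n\<ge>no. norm (sq n - ?L) < e"
    proof (intro exI allI impI)
      fix n assume n: "n \<ge> max N 1"
      have "sq n \<le> sq k * root n (real C)" using sq_key[OF k(1), of n] n unfolding C_def by simp
      also have "\<dots> \<le> sq k * (1 + d)" using N[of n] n sk
        by (intro mult_left_mono) auto
      also have "\<dots> = sq k + e/2" using sk by (simp add: d_def field_simps)
      finally have "sq n < ?L + e" using k by simp
      moreover have "?L \<le> sq n" using lo n by simp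
      ultimately show "norm (sq n - ?L) < e" by simp
    qed
  qed
qed

lemma mu_le: "m \<ge> 1 \<Longrightarrow> conn_const ^ m \<le> real (c_num m)"
  and mu_ge: "conn_const \<ge> 1"
proof -
  have cc: "conn_const = Inf (sq ` {1..})"
    unfolding conn_const_def using conv limI unfolding sq_def[abs_def] by blast
  show "conn_const \<ge> 1" using cc inf_ge by simp
  assume m: "m \<ge> 1"
  have "conn_const ^ m \<le> sq m ^ m" using cc inf_le[OF m] inf_ge by (intro power_mono) auto
  also have "\<dots> = real (c_num m)" unfolding sq_def using m by (simp add: real_root_pow_pos2)
  finally show "conn_const ^ m \<le> real (c_num m)" .
qed


definition ymax :: "pt list \<Rightarrow> int" where
  "ymax w = Max ((\<lambda>i. snd (w!i)) ` {..<length w})"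
definition lm :: "pt list \<Rightarrow> nat" where
  "lm w = Max {i. i < length w \<and> snd (w!i) = ymax w}"
definition tmin :: "pt list \<Rightarrow> int" where
  "tmin w = Min ((\<lambda>i. snd (w!i)) ` {lm w..<length w})"
definition Dd :: "pt list \<Rightarrow> int" where "Dd w = ymax w - tmin w"
definition rfl :: "int \<Rightarrow> pt \<Rightarrow> pt" where "rfl H p = (fst p, 2*H - snd p)"
definition uf :: "pt list \<Rightarrow> pt list" where
  "uf w = map (\<lambda>i. if i \<le> lm w then w!i else rfl (ymax w) (w!i)) [0..<length w]"

definition Ey :: "pt list \<Rightarrow> bool" where
  "Ey w \<longleftrightarrow> (\<forall>i<length w. snd (w!i) \<le> snd (w!(length w - 1)))"
definition Hy :: "pt list \<Rightarrow> bool" where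
  "Hy w \<longleftrightarrow> (\<forall>i<length w. snd (w!0) \<le> snd (w!i))"
definition Exx :: "pt list \<Rightarrow> bool" where
  "Exx w \<longleftrightarrow> (\<forall>i<length w. fst (w!i) \<le> fst (w!(length w - 1)))"
definition Hx :: "pt list \<Rightarrow> bool" where
  "Hx w \<longleftrightarrow> (\<forall>i<length w. fst (w!0) \<le> fst (w!i))"

lemma rfl_rfl[simp]: "rfl H (rfl H p) = p" by (simp add: rfl_def)
lemma fst_rfl[simp]: "fst (rfl H p) = fst p" by (simp add: rfl_def)
lemma snd_rfl[simp]: "snd (rfl H p) = 2*H - snd p" by (simp add: rfl_def)
lemma rfl_inj: "rfl H p = rfl H q \<Longrightarrow> p = q" by (metis rfl_rfl)
lemma adjacent_rfl[simp]: "adjacent (rfl H p) (rfl H q) = adjacent p q"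
  by (simp add: adjacent_def rfl_def abs_minus_commute)
lemma rfl_fix: "snd p = H \<Longrightarrow> rfl H p = p" by (cases p) (simp add: rfl_def)

lemma uf_len[simp]: "length (uf w) = length w" by (simp add: uf_def)

context fixes w :: "pt list" assumes ne: "w \<noteq> []"
begin

lemma ymax_ge: "i < length w \<Longrightarrow> snd (w!i) \<le> ymax w"
  unfolding ymax_def by (intro Max_ge) auto

lemma ymax_ex: "\<exists>i<length w. snd (w!i) = ymax w"
proof -
  have "ymax w \<in> (\<lambda>i. snd (w!i)) ` {..<length w}" unfolding ymax_def
    using ne by (intro Max_in) auto
  then show ?thesis by auto
qed

lemma lm_props: "lm w < length w" "snd (w ! lm w) = ymax w"
proof -
  have "lm w \<in> {i. i < length w \<and> snd (w!i) = ymax w}" unfolding lm_def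
    using ymax_ex by (intro Max_in) auto
  then show "lm w < length w" "snd (w ! lm w) = ymax w" by auto
qed

lemma lm_after: "lm w < i \<Longrightarrow> i < length w \<Longrightarrow> snd (w!i) < ymax w"
proof -
  assume a: "lm w < i" "i < length w"
  have "snd (w!i) \<noteq> ymax w"
  proof
    assume "snd (w!i) = ymax w"
    then have "i \<le> lm w" unfolding lm_def using a by (intro Max_ge) auto
    then show False using a by simp
  qed
  then show ?thesis using ymax_ge[OF a(2)] by simp
qed

lemma tmin_le: "lm w \<le> i \<Longrightarrow> i < length w \<Longrightarrow> tmin w \<le> snd (w!i)"
  unfolding tmin_def by (intro Min_le) auto

lemma tmin_ex: "\<exists>i. lm w \<le> i \<and> i < length w \<and> snd (w!i) = tmin w"
proof -
  have "tmin w \<in> (\<lambda>i. snd (w!i)) ` {lm w..<length w}" unfolding tmin_def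
    using lm_props by (intro Min_in) auto
  then show ?thesis by auto
qed

lemma Dd_nonneg: "Dd w \<ge> 0"
  unfolding Dd_def using tmin_le[of "lm w"] lm_props by auto

lemma Dd0_iff: "Dd w = 0 \<longleftrightarrow> Ey w"
proof
  assume d: "Dd w = 0"
  have "lm w = length w - 1"
  proof (rule ccontr)
    assume "lm w \<noteq> length w - 1"
    then have "lm w < length w - 1" using lm_props by simp
    then have "snd (w!Suc (lm w)) < ymax w" "tmin w \<le> snd (w!Suc (lm w))"
      by (auto intro!: lm_after tmin_le)
    then show False using d by (simp add: Dd_def)
  qed
  then show "Ey w" unfolding Ey_def using lm_props ymax_ge by auto
next
  assume e: "Ey w"
  obtain j where j: "j < length w" "snd (w!j) = ymax w" using ymax_ex by blast
  have l: "length w - 1 < length w" using ne by simp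
  have y: "snd (w!(length w - 1)) = ymax w" using e j ymax_ge[OF l] unfolding Ey_def by force
  have "lm w = length w - 1"
  proof (rule ccontr)
    assume "lm w \<noteq> length w - 1"
    then have "lm w < length w - 1" using lm_props by simp
    then show False using lm_after[OF _ l] y by simp
  qed
  then obtain i where "lm w \<le> i" "i < length w" "snd (w!i) = tmin w" using tmin_ex by blast
  then have "i = length w - 1" using \<open>lm w = length w - 1\<close> by simp
  then show "Dd w = 0" using y \<open>snd (w!i) = tmin w\<close> by (simp add: Dd_def)
qed

lemma uf_nth: "i < length w \<Longrightarrow> uf w ! i = (if i \<le> lm w then w!i else rfl (ymax w) (w!i))"
  by (simp add: uf_def)
lemma uf_fst: "i < length w \<Longrightarrow> fst (uf w ! i) = fst (w!i)"
  by (simp add: uf_nth)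

lemma recover:
  assumes i: "i < length w"
  shows "w!i = (if (\<forall>j. i \<le> j \<longrightarrow> j < length w \<longrightarrow> snd (uf w ! j) > ymax w)
                then rfl (ymax w) (uf w ! i) else uf w ! i)"
proof (cases "i \<le> lm w")
  case True
  have "\<not> snd (uf w ! lm w) > ymax w" using lm_props by (simp add: uf_nth)
  then show ?thesis using True i lm_props by (auto simp: uf_nth)
next
  case False
  have "snd (uf w ! j) > ymax w" if "i \<le> j" "j < length w" for j
    using that False lm_after[of j] by (simp add: uf_nth)
  then show ?thesis using False i by (simp add: uf_nth)
qed

end

lemma uf_ne: "w \<noteq> [] \<Longrightarrow> uf w \<noteq> []" by (simp add: uf_def)

lemma uf_ymax: "w \<noteq> [] \<Longrightarrow> ymax (uf w) = ymax w + Dd w"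
  and uf_Dd: "w \<noteq> [] \<Longrightarrow> Dd w > 0 \<Longrightarrow> Dd (uf w) < Dd w"
proof -
  assume ne: "w \<noteq> []"
  have une: "uf w \<noteq> []" using ne by (simp add: uf_def)
  have le: "snd (uf w ! i) \<le> ymax w + Dd w" if "i < length w" for i
  proof (cases "i \<le> lm w")
    case True
    have "snd (w!i) \<le> ymax w" using ymax_ge[OF ne] that by blast
    then show ?thesis using True that Dd_nonneg[OF ne] by (simp add: uf_nth[OF ne])
  next
    case False then show ?thesis using that tmin_le[OF ne, of i] by (simp add: uf_nth[OF ne] Dd_def)
  qed
  obtain i0 where i0: "lm w \<le> i0" "i0 < length w" "snd (w!i0) = tmin w" using tmin_ex[OF ne] by blast
  have at: "snd (uf w ! i0) = ymax w + Dd w"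
  proof (cases "i0 = lm w")
    case True then have "Dd w = 0" using i0 lm_props[OF ne] by (simp add: Dd_def)
    then show ?thesis using True i0 lm_props[OF ne] by (simp add: uf_nth[OF ne])
  next
    case False then show ?thesis using i0 by (simp add: uf_nth[OF ne] Dd_def)
  qed
  have ym: "ymax (uf w) = ymax w + Dd w"
  proof (rule antisym)
    show "ymax (uf w) \<le> ymax w + Dd w" unfolding ymax_def[of "uf w"]
      using une le ne by (subst Max_le_iff) auto
    show "ymax w + Dd w \<le> ymax (uf w)" unfolding ymax_def[of "uf w"]
      using i0 at by (intro Max_ge_iff[THEN iffD2]) (auto intro!: bexI[of _ i0])
  qed
  then show "ymax (uf w) = ymax w + Dd w" .
  assume dpos: "Dd w > 0"
  have "lm w < lm (uf w)"
  proof (rule ccontr)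
    assume "\<not> lm w < lm (uf w)"
    then have "lm (uf w) \<le> lm w" by simp
    moreover have "snd (uf w ! lm (uf w)) = ymax w + Dd w"
      using lm_props[OF une] une ym by simp
    moreover have "lm (uf w) < length w" using lm_props[OF une] by simp
    moreover then have "snd (w ! lm (uf w)) \<le> ymax w" by (rule ymax_ge[OF ne])
    ultimately show False using dpos by (simp add: uf_nth[OF ne])
  qed
  have tl: "tmin (uf w) \<ge> ymax w + 1"
  proof -
    obtain j where j: "lm (uf w) \<le> j" "j < length (uf w)" "snd (uf w ! j) = tmin (uf w)"
      using tmin_ex[OF une] une by blast
    then have "lm w < j" using \<open>lm w < lm (uf w)\<close> by simp
    then show ?thesis using j lm_after[OF ne, of j] by (simp add: uf_nth[OF ne])
  qed
  show "Dd (uf w) < Dd w" using ym tl by (simp add: Dd_def)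
qed


lemma saw_ne: "saw n w \<Longrightarrow> w \<noteq> []" by (auto simp: saw_def)

lemma uf_saw:
  assumes s: "saw n w" shows "saw n (uf w)"
proof -
  have ne: "w \<noteq> []" using s by (rule saw_ne)
  have lw: "length w = n+1" and w0: "w!0 = (0,0)" and dw: "distinct w"
    and aw: "\<forall>i<n. adjacent (w!i) (w!Suc i)" using s by (auto simp: saw_def)
  note nth = uf_nth[OF ne]
  have lmn: "lm w < n+1" using lm_props[OF ne] lw by simp
  have "distinct (uf w)"
  proof (subst distinct_conv_nth, intro allI impI)
    fix i j assume ij: "i < length (uf w)" "j < length (uf w)" "i \<noteq> j"
    then have ij': "i < length w" "j < length w" by auto
    have wij: "w!i \<noteq> w!j" using dw ij' ij(3) by (simp add: nth_eq_iff_index_eq)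
    show "uf w ! i \<noteq> uf w ! j"
    proof (cases "i \<le> lm w"; cases "j \<le> lm w")
      assume "i \<le> lm w" "j \<le> lm w" then show ?thesis using wij ij' by (simp add: nth)
    next
      assume "\<not> i \<le> lm w" "\<not> j \<le> lm w" then show ?thesis using wij ij' by (simp add: nth) (metis rfl_rfl)
    next
      assume a: "i \<le> lm w" "\<not> j \<le> lm w"
      then have "snd (w!i) \<le> ymax w" "snd (w!j) < ymax w" using ij' ymax_ge[OF ne] lm_after[OF ne] by auto
      then have "snd (uf w ! i) < snd (uf w ! j)" using a ij' by (simp add: nth)
      then show ?thesis by auto
    next
      assume a: "\<not> i \<le> lm w" "j \<le> lm w"
      then have "snd (w!j) \<le> ymax w" "snd (w!i) < ymax w" using ij' ymax_ge[OF ne] lm_after[OF ne] by auto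
      then have "snd (uf w ! j) < snd (uf w ! i)" using a ij' by (simp add: nth)
      then show ?thesis by auto
    qed
  qed
  moreover have "\<forall>i<n. adjacent (uf w ! i) (uf w ! Suc i)"
  proof (intro allI impI)
    fix i assume i: "i < n"
    then have a: "adjacent (w!i) (w!Suc i)" using aw by simp
    consider "Suc i \<le> lm w" | "lm w < i" | "i = lm w" by linarith
    then show "adjacent (uf w ! i) (uf w ! Suc i)"
    proof cases
      case 1 then show ?thesis using a i lw by (simp add: nth)
    next
      case 2 then show ?thesis using a i lw by (simp add: nth)
    next
      case 3
      have "rfl (ymax w) (w!i) = w!i" using 3 lm_props[OF ne] by (simp add: rfl_fix)
      then show ?thesis using 3 a i lw adjacent_rfl[of "ymax w" "w!i" "w!Suc i"] by (simp add: nth)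
    qed
  qed
  moreover have "uf w ! 0 = (0,0)" using w0 lw by (simp add: nth)
  ultimately show ?thesis using lw by (simp add: saw_def)
qed

lemma uf_Hy: assumes s: "saw n w" "Hy w" shows "Hy (uf w)"
proof -
  have ne: "w \<noteq> []" using s by (simp add: saw_ne)
  have l: "0 < length w" using ne by simp
  show ?thesis unfolding Hy_def
  proof (intro allI impI)
    fix i assume i: "i < length (uf w)"
    have "snd (w!0) \<le> snd (w!i)" using s(2) i by (simp add: Hy_def)
    moreover have "snd (w!0) \<le> ymax w" using ymax_ge[OF ne l] .
    moreover have "i > lm w \<Longrightarrow> snd (w!i) < ymax w" using lm_after[OF ne] i by simp
    ultimately show "snd (uf w ! 0) \<le> snd (uf w ! i)" using i l by (auto simp: uf_nth[OF ne])
  qed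
qed

lemma uf_Hx: "w \<noteq> [] \<Longrightarrow> Hx w \<Longrightarrow> Hx (uf w)"
  unfolding Hx_def by (auto simp: uf_fst)
lemma uf_Exx: "w \<noteq> [] \<Longrightarrow> Exx w \<Longrightarrow> Exx (uf w)"
  unfolding Exx_def by (auto simp: uf_fst)

lemma uf_inj: assumes "w \<noteq> []" "v \<noteq> []" "length w = length v" "uf w = uf v" "ymax w = ymax v"
  shows "w = v"
proof (rule nth_equalityI)
  show "length w = length v" by fact
  fix i assume "i < length w"
  note r1 = recover[OF assms(1), of i] and r2 = recover[OF assms(2), of i]
  from \<open>i < length w\<close> have "i < length v" using assms(3) by simp
  show "w!i = v!i" unfolding r1[OF \<open>i < length w\<close>] r2[OF \<open>i < length v\<close>]
    by (simp only: assms(3-5))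
qed


fun K :: "nat \<Rightarrow> nat \<Rightarrow> nat" where
  "K r 0 = 1"
| "K r (Suc d) = (if Suc d \<le> r then (\<Sum>d'<Suc d. K (r - Suc d) d') else 0)"

definition P :: "real \<Rightarrow> nat \<Rightarrow> real" where "P x d = (\<Prod>k\<in>{1..<d}. 1 + x^k)"

lemma P_sum: assumes "d \<ge> 1" shows "(\<Sum>d'<d. x^d' * P x d') = P x d"
  using assms
proof (induction d rule: dec_induct)
  case base then show ?case by (simp add: P_def)
next
  case (step d)
  have "P x (Suc d) = P x d * (1 + x^d)" unfolding P_def using step(1)
    by (simp add: atLeastLessThanSuc prod.insert mult.commute)
  then show ?case using step by (simp add: algebra_simps)
qed

lemma P_nonneg: "x \<ge> 0 \<Longrightarrow> P x d \<ge> 0" unfolding P_def by (intro prod_nonneg) auto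

lemma K_bound:
  assumes x: "0 < x" "x < 1"
  shows "real (K r d) \<le> (1/x)^r * x^d * P x d"
proof (induction d arbitrary: r rule: less_induct)
  case (less d)
  show ?case
  proof (cases d)
    case 0 then show ?thesis using x by (simp add: P_def)
  next
    case (Suc d0)
    show ?thesis
    proof (cases "d \<le> r")
      case False then show ?thesis using Suc x by (simp add: P_nonneg)
    next
      case True
      have "real (K r d) = (\<Sum>d'<d. real (K (r - d) d'))" using Suc True by simp
      also have "\<dots> \<le> (\<Sum>d'<d. (1/x)^(r-d) * x^d' * P x d')"
        by (intro sum_mono less.IH) auto
      also have "\<dots> = (1/x)^(r-d) * (\<Sum>d'<d. x^d' * P x d')"
        by (simp add: sum_distrib_left mult.assoc)
      also have "\<dots> = (1/x)^(r-d) * P x d" using P_sum[of d x] Suc by simp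
      also have "\<dots> = (1/x)^r * x^d * P x d"
      proof -
        have "(1/x)^r * x^d = (1/x)^(r-d)" using True x
          by (simp add: power_diff field_simps)
        then show ?thesis by simp
      qed
      finally show ?thesis .
    qed
  qed
qed

lemma P_le: assumes x: "0 < x" "x < 1" shows "P x d \<le> exp (1/(1-x))"
proof -
  have "P x d \<le> (\<Prod>k\<in>{1..<d}. exp (x^k))" unfolding P_def
    using x by (intro prod_mono conjI) (simp_all add: add_nonneg_nonneg exp_ge_add_one_self)
  also have "\<dots> = exp (\<Sum>k\<in>{1..<d}. x^k)" by (simp add: exp_sum)
  also have "(\<Sum>k\<in>{1..<d}. x^k) \<le> (\<Sum>k<d. x^k)"
    by (intro sum_mono2) (use x in auto)
  also have "\<dots> = (1 - x^d)/(1-x)" using x by (simp add: sum_gp_strict)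
  also have "\<dots> \<le> 1/(1-x)" using x by (intro divide_right_mono) auto
  finally show ?thesis by simp
qed

lemma K_final:
  assumes "r \<le> n"
  shows "real (K r d) \<le> exp (2 * sqrt (real n + 1) + 1)"
proof -
  define s where "s = sqrt (real n + 1)"
  have s1: "s \<ge> 1" unfolding s_def by simp
  have ss: "s * s = real n + 1" unfolding s_def by simp
  define x where "x = exp (- (1/s))"
  have x0: "0 < x" and x1: "x < 1" using s1 by (auto simp: x_def)
  have "real (K r d) \<le> (1/x)^r * x^d * P x d" by (rule K_bound[OF x0 x1])
  also have "\<dots> \<le> (1/x)^n * 1 * exp (1/(1-x))"
  proof (intro mult_mono)
    show "(1/x)^r \<le> (1/x)^n" using assms x0 x1 by (intro power_increasing) auto
    show "x^d \<le> 1" using x0 x1 by (simp add: power_le_one)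
    show "P x d \<le> exp (1/(1-x))" by (rule P_le[OF x0 x1])
  qed (use x0 P_nonneg[of x d] in auto)
  also have "(1/x)^n = exp (real n / s)"
    unfolding x_def by (simp add: exp_minus exp_of_nat_mult[symmetric] field_simps)
  also have "real n / s \<le> s" using s1 ss by (simp add: divide_le_eq)
  also have "1/(1-x) \<le> s + 1"
  proof -
    have "1 + 1/s \<le> exp (1/s)" by (rule exp_ge_add_one_self)
    then have "x \<le> 1 / (1 + 1/s)" unfolding x_def using s1
      by (simp add: exp_minus field_simps)
    also have "\<dots> = s/(s+1)" using s1 by (simp add: field_simps)
    finally have "1 - x \<ge> 1/(s+1)" using s1 by (simp add: field_simps)
    then show ?thesis using s1 x1 by (simp add: divide_le_eq field_simps)
  qed
  finally have "real (K r d) \<le> exp s * exp (s + 1)" by (simp add: mult_mono)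
  then show ?thesis by (simp add: s_def exp_add[symmetric])
qed


lemma ybounds: assumes s: "saw n w"
  shows "0 \<le> ymax w" "ymax w \<le> int n" "0 \<le> Dd w" "Dd w \<le> 2 * int n"
proof -
  have ne: "w \<noteq> []" using s by (rule saw_ne)
  have lw: "length w = n+1" and w0: "w!0 = (0,0)" using s by (auto simp: saw_def)
  have b: "\<bar>snd (w!i)\<bar> \<le> int n" if "i < length w" for i
    using saw_bound[OF s, of i] that lw by simp
  show "0 \<le> ymax w" using ymax_ge[OF ne, of 0] w0 lw by simp
  show "ymax w \<le> int n" using ymax_ex[OF ne] b by force
  show "0 \<le> Dd w" by (rule Dd_nonneg[OF ne])
  obtain i where "lm w \<le> i" "i < length w" "snd (w!i) = tmin w" using tmin_ex[OF ne] by blast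
  then have "tmin w \<ge> - int n" using b by force
  then show "Dd w \<le> 2 * int n" using \<open>ymax w \<le> int n\<close> by (simp add: Dd_def)
qed

lemma count_A:
  assumes T: "T \<subseteq> {w. saw n w}" and cl: "\<forall>w\<in>T. Dd w > 0 \<longrightarrow> uf w \<in> T"
  shows "0 \<le> M \<Longrightarrow> M \<le> int n \<Longrightarrow>
    card {w\<in>T. ymax w = M \<and> Dd w = int d} \<le> K (nat (int n - M)) d * card {w\<in>T. Ey w}"
proof (induction d arbitrary: M rule: less_induct)
  case (less d)
  have finT: "finite T" using T finite_saw finite_subset by blast
  let ?S = "{w\<in>T. ymax w = M \<and> Dd w = int d}"
  let ?E = "{w\<in>T. Ey w}"
  show ?case
  proof (cases d)
    case 0
    have "?S \<subseteq> ?E"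
    proof
      fix w assume w: "w \<in> ?S"
      then have "w \<noteq> []" using T saw_ne by blast
      then show "w \<in> ?E" using w 0 Dd0_iff[of w] by simp
    qed
    then show ?thesis using 0 finT by (simp add: card_mono)
  next
    case (Suc d0)
    show ?thesis
    proof (cases "M + int d \<le> int n")
      case False
      have e: "?S = {}"
      proof (rule ccontr)
        assume "?S \<noteq> {}"
        then obtain w where w: "w \<in> T" "ymax w = M" "Dd w = int d" by auto
        then have "uf w \<in> T" using cl Suc by simp
        then have "ymax (uf w) \<le> int n" using T ybounds(2) by blast
        moreover have "w \<noteq> []" using w(1) T saw_ne by blast
        moreover then have "ymax (uf w) = M + int d" using uf_ymax w by simp
        ultimately show False using False by simp
      qed
      show ?thesis unfolding e by simp
    next
      case True
      let ?U = "\<Union>d'\<in>{..<d}. {v\<in>T. ymax v = M + int d \<and> Dd v = int d'}"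
      have inj: "inj_on uf ?S"
      proof (rule inj_onI)
        fix w v assume a: "w \<in> ?S" "v \<in> ?S" "uf w = uf v"
        then have sw: "saw n w" and sv: "saw n v" using T by auto
        have l: "length w = length v" using sw sv by (simp add: saw_def)
        have y: "ymax w = ymax v" using a(1,2) by simp
        show "w = v" by (rule uf_inj[OF saw_ne[OF sw] saw_ne[OF sv] l a(3) y])
      qed
      have img: "uf ` ?S \<subseteq> ?U"
      proof (rule image_subsetI)
        fix w assume w: "w \<in> ?S"
        then have ne: "w \<noteq> []" and sw: "saw n w" using T saw_ne by auto
        have dp: "Dd w > 0" using w Suc by simp
        have u: "uf w \<in> T" using cl w dp by auto
        have "Dd (uf w) < int d" using uf_Dd[OF ne dp] w by simp
        moreover have "Dd (uf w) \<ge> 0" using ybounds(3)[OF uf_saw[OF sw]] .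
        ultimately have "nat (Dd (uf w)) \<in> {..<d}" "Dd (uf w) = int (nat (Dd (uf w)))" by auto
        moreover have "ymax (uf w) = M + int d" using uf_ymax[OF ne] w by simp
        ultimately show "uf w \<in> ?U" using u by (intro UN_I[of "nat (Dd (uf w))"]) simp_all
      qed
      have "card ?S = card (uf ` ?S)" using card_image[OF inj] by simp
      also have "\<dots> \<le> card ?U"
      proof (rule card_mono[OF _ img])
        have "?U \<subseteq> T" by blast
        then show "finite ?U" using finT by (rule finite_subset)
      qed
      also have "\<dots> \<le> (\<Sum>d'<d. card {v\<in>T. ymax v = M + int d \<and> Dd v = int d'})"
        by (rule card_UN_le) simp
      also have "\<dots> \<le> (\<Sum>d'<d. K (nat (int n - (M + int d))) d' * card ?E)"
      proof (rule sum_mono)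
        fix d' assume "d' \<in> {..<d}"
        then show "card {v\<in>T. ymax v = M + int d \<and> Dd v = int d'} \<le> K (nat (int n - (M + int d))) d' * card ?E"
          using less.IH[of d' "M + int d"] less.prems True by simp
      qed
      also have "\<dots> = K (nat (int n - M)) d * card ?E"
      proof -
        have "nat (int n - (M + int d)) = nat (int n - M) - Suc d0" using True Suc less.prems by simp
        moreover have "Suc d0 \<le> nat (int n - M)" using True Suc by simp
        ultimately have "K (nat (int n - M)) d = (\<Sum>d'<d. K (nat (int n - (M + int d))) d')"
          using Suc by (simp del: sum.lessThan_Suc)
        then show ?thesis by (simp only: sum_distrib_right)
      qed
      finally show ?thesis .
    qed
  qed
qed


definition Fb :: "nat \<Rightarrow> real" where
  "Fb n = real ((n+1) * (2*n+1)) * exp (2 * sqrt (real n + 1) + 1)"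

lemma Fb_pos: "Fb n > 0" unfolding Fb_def by (intro mult_pos_pos) (auto intro: add_pos_nonneg)

lemma count_T:
  assumes T: "T \<subseteq> {w. saw n w}" and cl: "\<forall>w\<in>T. Dd w > 0 \<longrightarrow> uf w \<in> T"
  shows "real (card T) \<le> Fb n * real (card {w\<in>T. Ey w})"
proof -
  let ?E = "{w\<in>T. Ey w}"
  let ?S = "\<lambda>M d. {w\<in>T. ymax w = int M \<and> Dd w = int d}"
  have sub: "T \<subseteq> (\<Union>M\<in>{..n}. \<Union>d\<in>{..2*n}. ?S M d)"
  proof
    fix w assume w: "w \<in> T"
    then have s: "saw n w" using T by auto
    note yb = ybounds[OF s]
    have "nat (ymax w) \<in> {..n}" "nat (Dd w) \<in> {..2*n}" using yb by auto
    moreover have "w \<in> ?S (nat (ymax w)) (nat (Dd w))" using w yb by auto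
    ultimately show "w \<in> (\<Union>M\<in>{..n}. \<Union>d\<in>{..2*n}. ?S M d)" by blast
  qed
  have "card T \<le> card (\<Union>M\<in>{..n}. \<Union>d\<in>{..2*n}. ?S M d)"
  proof (rule card_mono[OF _ sub])
    have "finite T" using T finite_saw finite_subset by blast
    then show "finite (\<Union>M\<in>{..n}. \<Union>d\<in>{..2*n}. ?S M d)" by (rule finite_subset[rotated]) auto
  qed
  also have "\<dots> \<le> (\<Sum>M\<le>n. card (\<Union>d\<in>{..2*n}. ?S M d))" by (rule card_UN_le) simp
  also have "\<dots> \<le> (\<Sum>M\<le>n. \<Sum>d\<le>2*n. card (?S M d))"
    by (intro sum_mono card_UN_le) simp
  finally have c: "card T \<le> (\<Sum>M\<le>n. \<Sum>d\<le>2*n. card (?S M d))" .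
  have "real (card T) \<le> real (\<Sum>M\<le>n. \<Sum>d\<le>2*n. card (?S M d))"
    using c by (simp only: of_nat_le_iff)
  also have "\<dots> = (\<Sum>M\<le>n. \<Sum>d\<le>2*n. real (card (?S M d)))" by (simp only: of_nat_sum)
  also have "\<dots> \<le> (\<Sum>M\<le>n. \<Sum>d\<le>2*n. exp (2 * sqrt (real n + 1) + 1) * real (card ?E))"
  proof (intro sum_mono)
    fix M d assume M: "M \<in> {..n}"
    have "card (?S M d) \<le> K (nat (int n - int M)) d * card ?E"
      using count_A[OF T cl, of "int M" d] M by simp
    then have "real (card (?S M d)) \<le> real (K (nat (int n - int M)) d) * real (card ?E)"
      by (simp only: of_nat_le_iff of_nat_mult[symmetric])
    also have "\<dots> \<le> exp (2 * sqrt (real n + 1) + 1) * real (card ?E)"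
      by (intro mult_right_mono K_final) auto
    finally show "real (card (?S M d)) \<le> exp (2 * sqrt (real n + 1) + 1) * real (card ?E)" .
  qed
  also have "\<dots> = Fb n * real (card ?E)" by (simp add: Fb_def algebra_simps)
  finally show ?thesis .
qed


definition rv :: "pt list \<Rightarrow> pt list" where
  "rv w = map (\<lambda>p. (fst (last w) - fst p, snd (last w) - snd p)) (rev w)"
definition swp :: "pt list \<Rightarrow> pt list" where
  "swp w = map (\<lambda>p. (snd p, fst p)) w"

lemma rv_len[simp]: "length (rv w) = length w" by (simp add: rv_def)
lemma rv_nth: "i < length w \<Longrightarrow> rv w ! i =
   (fst (w!(length w - 1)) - fst (w!(length w - 1 - i)), snd (w!(length w - 1)) - snd (w!(length w - 1 - i)))"
  by (cases "w = []") (auto simp: rv_def rev_nth last_conv_nth)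

lemma rv_saw: assumes s: "saw n w" shows "saw n (rv w)"
proof -
  have lw: "length w = n+1" and w0: "w!0 = (0,0)" and dw: "distinct w"
    and aw: "\<forall>i<n. adjacent (w!i) (w!Suc i)" using s by (auto simp: saw_def)
  have inj: "inj (\<lambda>p::pt. (fst (last w) - fst p, snd (last w) - snd p))"
    by (rule injI) (auto simp: prod_eq_iff)
  have "distinct (rv w)" unfolding rv_def using dw by (simp add: distinct_map inj_on_subset[OF inj])
  moreover have "rv w ! 0 = (0,0)" using lw by (simp add: rv_nth)
  moreover have "\<forall>i<n. adjacent (rv w ! i) (rv w ! Suc i)"
  proof (intro allI impI)
    fix i assume i: "i < n"
    have "adjacent (w!(n - Suc i)) (w!Suc (n - Suc i))" using aw i by simp
    moreover have "Suc (n - Suc i) = n - i" using i by simp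
    ultimately have "adjacent (w!(n - i)) (w!(n - Suc i))" by (simp add: adjacent_sym)
    then show "adjacent (rv w ! i) (rv w ! Suc i)" using i lw
      by (simp add: rv_nth adjacent_def abs_minus_commute)
  qed
  ultimately show ?thesis using lw by (simp add: saw_def)
qed

lemma rv_rv: assumes s: "saw n w" shows "rv (rv w) = w"
proof (rule nth_equalityI)
  show "length (rv (rv w)) = length w" by simp
  have lw: "length w = n+1" and w0: "w!0 = (0,0)" using s by (auto simp: saw_def)
  fix i assume "i < length (rv (rv w))"
  then have i: "i < n+1" using lw by simp
  then show "rv (rv w) ! i = w ! i" using lw w0
    by (simp add: rv_nth prod_eq_iff)
qed

lemma rv_Hy: assumes "saw n w" "Ey w" shows "Hy (rv w)"
proof -
  have lw: "length w = n+1" using assms by (simp add: saw_def)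
  show ?thesis unfolding Hy_def
  proof (intro allI impI)
    fix i assume "i < length (rv w)"
    then have i: "i < n+1" using lw by simp
    then have "snd (w!(n-i)) \<le> snd (w!n)" using assms(2) lw by (simp add: Ey_def)
    then show "snd (rv w ! 0) \<le> snd (rv w ! i)" using i lw by (simp add: rv_nth)
  qed
qed

lemma rv_Ey: assumes "saw n w" "Hy w" shows "Ey (rv w)"
proof -
  have lw: "length w = n+1" using assms by (simp add: saw_def)
  show ?thesis unfolding Ey_def
  proof (intro allI impI)
    fix i assume "i < length (rv w)"
    then have i: "i < n+1" using lw by simp
    then have "snd (w!0) \<le> snd (w!(n-i))" using assms(2) lw by (simp add: Hy_def)
    then show "snd (rv w ! i) \<le> snd (rv w ! (length (rv w) - 1))" using i lw by (simp add: rv_nth)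
  qed
qed

lemma rv_Hx: assumes "saw n w" "Exx w" shows "Hx (rv w)"
proof -
  have lw: "length w = n+1" using assms by (simp add: saw_def)
  show ?thesis unfolding Hx_def
  proof (intro allI impI)
    fix i assume "i < length (rv w)"
    then have i: "i < n+1" using lw by simp
    then have "fst (w!(n-i)) \<le> fst (w!n)" using assms(2) lw by (simp add: Exx_def)
    then show "fst (rv w ! 0) \<le> fst (rv w ! i)" using i lw by (simp add: rv_nth)
  qed
qed

lemma rv_Exx: assumes "saw n w" "Hx w" shows "Exx (rv w)"
proof -
  have lw: "length w = n+1" using assms by (simp add: saw_def)
  show ?thesis unfolding Exx_def
  proof (intro allI impI)
    fix i assume "i < length (rv w)"
    then have i: "i < n+1" using lw by simp
    then have "fst (w!0) \<le> fst (w!(n-i))" using assms(2) lw by (simp add: Hx_def)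
    then show "fst (rv w ! i) \<le> fst (rv w ! (length (rv w) - 1))" using i lw by (simp add: rv_nth)
  qed
qed

lemma swp_swp[simp]: "swp (swp w) = w" by (induction w) (auto simp: swp_def)
lemma swp_len[simp]: "length (swp w) = length w" by (simp add: swp_def)
lemma swp_nth[simp]: "i < length w \<Longrightarrow> swp w ! i = (snd (w!i), fst (w!i))" by (simp add: swp_def)

lemma swp_saw: assumes s: "saw n w" shows "saw n (swp w)"
proof -
  have inj: "inj (\<lambda>p::pt. (snd p, fst p))" by (rule injI) (auto simp: prod_eq_iff)
  show ?thesis using s unfolding saw_def
    by (auto simp: distinct_map inj_on_subset[OF inj] adjacent_def swp_def add.commute)
qed

lemma swp_props: "Hx (swp w) = Hy w" "Exx (swp w) = Ey w" "Hy (swp w) = Hx w" "Ey (swp w) = Exx w"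
  by (cases "w = []"; simp add: Hx_def Hy_def Exx_def Ey_def)+

definition Rect :: "nat \<Rightarrow> pt list set" where
  "Rect n = {w. saw n w \<and> Hx w \<and> Exx w \<and> Hy w \<and> Ey w}"

lemma inj_card_le: "finite B \<Longrightarrow> inj_on f A \<Longrightarrow> f ` A \<subseteq> B \<Longrightarrow> real (card A) \<le> real (card B)"
  using card_inj_on_le by (metis of_nat_le_iff)

lemma chain: "real (c_num n) \<le> Fb n ^ 4 * real (card (Rect n))"
proof -
  let ?S = "{w. saw n w}"
  have fin: "finite {w. saw n w \<and> P w}" for P using finite_saw[of n] by (rule finite_subset[rotated]) auto
  have fin': "finite {w\<in>{w. saw n w \<and> P w}. Q w}" for P Q
    using finite_saw[of n] by (rule finite_subset[rotated]) auto
  have Fb0: "Fb n \<ge> 0" using Fb_pos[of n] by simp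
  have s1: "real (card ?S) \<le> Fb n * real (card {w\<in>?S. Ey w})"
    by (rule count_T) (auto intro: uf_saw)
  have s2: "real (card {w\<in>?S. Ey w}) \<le> real (card {w. saw n w \<and> Hy w})"
  proof (rule inj_card_le[OF fin])
    show "inj_on rv {w\<in>?S. Ey w}" by (rule inj_onI) (metis (mono_tags, lifting) mem_Collect_eq rv_rv)
    show "rv ` {w\<in>?S. Ey w} \<subseteq> {w. saw n w \<and> Hy w}" by (auto intro: rv_saw rv_Hy)
  qed
  have s3: "real (card {w. saw n w \<and> Hy w}) \<le> Fb n * real (card {w\<in>{w. saw n w \<and> Hy w}. Ey w})"
    by (rule count_T) (auto intro: uf_saw uf_Hy)
  have s4: "real (card {w\<in>{w. saw n w \<and> Hy w}. Ey w}) \<le> real (card {w. saw n w \<and> Hx w \<and> Exx w})"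
  proof (rule inj_card_le[OF fin])
    show "inj_on swp {w\<in>{w. saw n w \<and> Hy w}. Ey w}" by (rule inj_onI) (metis swp_swp)
    show "swp ` {w\<in>{w. saw n w \<and> Hy w}. Ey w} \<subseteq> {w. saw n w \<and> Hx w \<and> Exx w}"
      by (auto intro: swp_saw simp: swp_props)
  qed
  have s5: "real (card {w. saw n w \<and> Hx w \<and> Exx w}) \<le> Fb n * real (card {w\<in>{w. saw n w \<and> Hx w \<and> Exx w}. Ey w})"
    by (rule count_T) (auto simp: uf_saw uf_Hx[OF saw_ne] uf_Exx[OF saw_ne])
  have s6: "real (card {w\<in>{w. saw n w \<and> Hx w \<and> Exx w}. Ey w}) \<le> real (card {w. saw n w \<and> Hx w \<and> Exx w \<and> Hy w})"
  proof (rule inj_card_le[OF fin])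
    show "inj_on rv {w\<in>{w. saw n w \<and> Hx w \<and> Exx w}. Ey w}" by (rule inj_onI) (metis (mono_tags, lifting) mem_Collect_eq rv_rv)
    show "rv ` {w\<in>{w. saw n w \<and> Hx w \<and> Exx w}. Ey w} \<subseteq> {w. saw n w \<and> Hx w \<and> Exx w \<and> Hy w}"
      by (auto intro: rv_saw rv_Hy rv_Hx rv_Exx)
  qed
  have s7: "real (card {w. saw n w \<and> Hx w \<and> Exx w \<and> Hy w}) \<le> Fb n * real (card {w\<in>{w. saw n w \<and> Hx w \<and> Exx w \<and> Hy w}. Ey w})"
    by (rule count_T) (auto simp: uf_saw uf_Hx[OF saw_ne] uf_Exx[OF saw_ne] uf_Hy)
  have e: "{w\<in>{w. saw n w \<and> Hx w \<and> Exx w \<and> Hy w}. Ey w} = Rect n" by (auto simp: Rect_def)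
  have "real (c_num n) \<le> Fb n * (Fb n * (Fb n * (Fb n * real (card (Rect n)))))"
    unfolding c_num_def using s1 s2 s3 s4 s5 s6 s7 e Fb0
    by (smt (verit) mult_left_mono)
  then show ?thesis by (simp add: power4_eq_xxxx mult.assoc)
qed


lemma rect_box: assumes w: "w \<in> Rect n" and p: "p \<in> set w"
  shows "0 \<le> fst p \<and> fst p \<le> fst (w!n) \<and> 0 \<le> snd p \<and> snd p \<le> snd (w!n)"
proof -
  have s: "saw n w" and hx: "Hx w" and ex: "Exx w" and hy: "Hy w" and ey: "Ey w"
    using w by (auto simp: Rect_def)
  have lw: "length w = n+1" and w0: "w!0 = (0,0)" using s by (auto simp: saw_def)
  obtain i where i: "i < length w" "p = w!i" using p by (auto simp: in_set_conv_nth)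
  show ?thesis using hx ex hy ey i lw w0 unfolding Hx_def Exx_def Hy_def Ey_def
    by (metis add_diff_cancel_right' fst_conv snd_conv)
qed

definition cat :: "nat \<Rightarrow> pt list \<Rightarrow> pt list \<Rightarrow> pt list" where
  "cat n w v = w @ tl (map (sh (w!n)) v)"

definition Rab :: "nat \<Rightarrow> int \<Rightarrow> int \<Rightarrow> pt list set" where
  "Rab n A B = {w \<in> Rect n. w!n = (A,B)}"

lemma cat_sq:
  assumes n: "n \<ge> 1" and w: "w \<in> Rab n A B" and v: "v \<in> Rab n B A"
  shows "squared_walk (2*n) (cat n w v)"
proof -
  have wR: "w \<in> Rect n" and wn: "w!n = (A,B)" and vR: "v \<in> Rect n" and vn: "v!n = (B,A)"
    using w v by (auto simp: Rab_def)
  have sw: "saw n w" and sv: "saw n v" using wR vR by (auto simp: Rect_def)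
  have lw: "length w = n+1" and w0: "w!0 = (0,0)" and dw: "distinct w" and aw: "successively adjacent w"
    using sw by (auto simp: saw_alt)
  have lv: "length v = n+1" and v0: "v!0 = (0,0)" and dv: "distinct v" and av: "successively adjacent v"
    using sv by (auto simp: saw_alt)
  have bw: "p \<in> set w \<Longrightarrow> 0 \<le> fst p \<and> fst p \<le> A \<and> 0 \<le> snd p \<and> snd p \<le> B" for p
    using rect_box[OF wR, of p] wn by simp
  have bv: "p \<in> set v \<Longrightarrow> 0 \<le> fst p \<and> fst p \<le> B \<and> 0 \<le> snd p \<and> snd p \<le> A" for p
    using rect_box[OF vR, of p] vn by simp
  have "w!n \<in> set w" using lw by simp
  then have A0: "0 \<le> A" and B0: "0 \<le> B" using bw[of "w!n"] wn by auto
  obtain v1 vs where vv: "v = (0,0) # v1 # vs" using lv v0 n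
    by (cases v; cases "tl v") (auto)
  define t where "t = map (sh (A,B)) (v1 # vs)"
  have ct: "cat n w v = w @ t" unfolding cat_def t_def using vv wn by simp
  have lt: "length t = n" using lv vv by (simp add: t_def)
  have tset: "q \<in> set t \<Longrightarrow> \<exists>p\<in>set v. p \<noteq> (0,0) \<and> q = sh (A,B) p" for q
    using dv vv by (auto simp: t_def)
  have "distinct (w @ t)"
  proof -
    have "distinct (v1 # vs)" using dv vv by simp
    then have "distinct t" unfolding t_def by (simp only: distinct_map inj_on_subset[OF inj_sh] simp_thms subset_UNIV)
    moreover have "set w \<inter> set t = {}"
    proof (rule ccontr)
      assume "set w \<inter> set t \<noteq> {}"
      then obtain q where q: "q \<in> set w" "q \<in> set t" by blast
      then obtain p where p: "p \<in> set v" "p \<noteq> (0,0)" "q = sh (A,B) p" using tset by blast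
      have "fst q \<le> A" "snd q \<le> B" using bw[OF q(1)] by auto
      moreover have "0 \<le> fst p" "0 \<le> snd p" using bv[OF p(1)] by auto
      ultimately show False using p(2,3) by (auto simp: sh_def prod_eq_iff)
    qed
    ultimately show ?thesis using dw by simp
  qed
  moreover have "successively adjacent (w @ t)"
  proof -
    have "successively adjacent (map (sh (A,B)) v)" using av by (simp add: successively_map)
    then have st: "successively adjacent t" "adjacent (sh (A,B) (0,0)) (sh (A,B) v1)"
      using vv by (auto simp: t_def)
    have "w \<noteq> []" using lw by auto
    then have "last w = (A,B)" using wn lw by (simp add: last_conv_nth)
    moreover have "sh (A,B) (0,0) = (A,B)" by (simp add: sh_def)
    ultimately show ?thesis using st aw by (auto simp: successively_append_iff t_def)
  qed
  moreover have "(w @ t) ! 0 = (0,0)" using w0 lw by (simp add: nth_append)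
  moreover have "length (w @ t) = 2*n + 1" using lw lt by simp
  ultimately have saw2: "saw (2*n) (w @ t)" by (simp add: saw_alt)
  have last: "(w @ t) ! (2*n) = (A+B, A+B)"
  proof -
    have "(w @ t) ! (2*n) = t ! (n - 1)" using lw n by (simp add: nth_append)
    also have "\<dots> = sh (A,B) (v!n)" using vv lv n unfolding t_def
      by (cases n) (auto simp: nth_Cons')
    finally show ?thesis using vn by (simp add: sh_def add.commute)
  qed
  have box: "\<forall>p\<in>set (w @ t). 0 \<le> fst p \<and> fst p \<le> A+B \<and> 0 \<le> snd p \<and> snd p \<le> A+B"
  proof
    fix p assume "p \<in> set (w @ t)"
    then consider "p \<in> set w" | "p \<in> set t" by auto
    then show "0 \<le> fst p \<and> fst p \<le> A+B \<and> 0 \<le> snd p \<and> snd p \<le> A+B"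
    proof cases
      case 1 then show ?thesis using bw[of p] A0 B0 by auto
    next
      case 2 then obtain q where "q \<in> set v" "p = sh (A,B) q" using tset by blast
      then show ?thesis using bv[of q] A0 B0 by (auto simp: sh_def)
    qed
  qed
  show ?thesis unfolding squared_walk_def ct using saw2 last box A0 B0
    by (intro conjI exI[of _ "A+B"]) auto
qed

lemma cat_inj: assumes "n \<ge> 1"
  shows "inj_on (\<lambda>(w,v). cat n w v) (Rab n A B \<times> Rab n B A)"
proof (rule inj_onI, clarify)
  fix w v w' v' assume a: "w \<in> Rab n A B" "v \<in> Rab n B A" "w' \<in> Rab n A B" "v' \<in> Rab n B A"
    and e: "cat n w v = cat n w' v'"
  have lw: "length w = n+1" "length w' = n+1" using a by (auto simp: Rab_def Rect_def saw_def)
  have wn: "w!n = (A,B)" "w'!n = (A,B)" using a by (auto simp: Rab_def)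
  have "w = w'" using e lw unfolding cat_def by (metis append_eq_append_conv)
  moreover have "tl (map (sh (A,B)) v) = tl (map (sh (A,B)) v')" using e lw wn unfolding cat_def by simp
  moreover have lv: "length v = n+1" "length v' = n+1" "v!0 = (0,0)" "v'!0 = (0,0)"
    using a by (auto simp: Rab_def Rect_def saw_def)
  moreover have "v \<noteq> []" "v' \<noteq> []" using lv by auto
  moreover have "hd v = (0,0)" "hd v' = (0,0)" using lv \<open>v \<noteq> []\<close> \<open>v' \<noteq> []\<close> by (simp_all add: hd_conv_nth)
  ultimately have "map (sh (A,B)) v = map (sh (A,B)) v'"
    by (metis hd_map list.collapse map_is_Nil_conv)
  then have "v = v'" using inj_sh by (metis inj_map_eq_map)
  then show "w = w' \<and> v = v'" using \<open>w = w'\<close> by simp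
qed


lemma finite_sq: "finite {w. squared_walk n w}"
  using finite_saw[of n] by (rule finite_subset[rotated]) (auto simp: squared_walk_def)

lemma finite_Rab: "finite (Rab n A B)"
  using finite_saw[of n] by (rule finite_subset[rotated]) (auto simp: Rab_def Rect_def)

lemma pigeon: "\<exists>A B. real (card (Rect m)) \<le> real ((m+1)^2) * real (card (Rab m A B))"
proof -
  define P where "P = {0..int m} \<times> {0..int m}"
  define f where "f p = card (Rab m (fst p) (snd p))" for p
  have finP: "finite P" and neP: "P \<noteq> {}" by (auto simp: P_def)
  have "nat (int m + 1) = m + 1" by (simp add: nat_eq_iff)
  then have cP: "card P = (m+1)^2" by (simp add: P_def card_cartesian_product power2_eq_square)
  have sub: "Rect m \<subseteq> (\<Union>p\<in>P. Rab m (fst p) (snd p))"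
  proof
    fix w assume w: "w \<in> Rect m"
    then have s: "saw m w" by (simp add: Rect_def)
    have lw: "length w = m+1" using s by (simp add: saw_def)
    have "w!m \<in> set w" using lw by simp
    then have "0 \<le> fst (w!m)" "0 \<le> snd (w!m)" using rect_box[OF w] by blast+
    moreover have "\<bar>fst (w!m)\<bar> + \<bar>snd (w!m)\<bar> \<le> int m" using saw_bound[OF s, of m] by simp
    ultimately have "w!m \<in> P" by (auto simp: P_def mem_Times_iff)
    moreover have "w \<in> Rab m (fst (w!m)) (snd (w!m))" using w by (simp add: Rab_def)
    ultimately show "w \<in> (\<Union>p\<in>P. Rab m (fst p) (snd p))" by blast
  qed
  have "card (Rect m) \<le> card (\<Union>p\<in>P. Rab m (fst p) (snd p))"
    by (rule card_mono[OF _ sub]) (use finP finite_Rab in auto)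
  also have "\<dots> \<le> (\<Sum>p\<in>P. f p)" unfolding f_def by (rule card_UN_le[OF finP])
  also have "\<dots> \<le> card P * Max (f ` P)"
    using sum_bounded_above[of P f "Max (f ` P)"] finP by (simp add: Max_ge)
  finally have c: "card (Rect m) \<le> (m+1)^2 * Max (f ` P)" using cP by simp
  have "Max (f ` P) \<in> f ` P" using finP neP by (intro Max_in) auto
  then obtain p where "Max (f ` P) = f p" by auto
  then have "card (Rect m) \<le> (m+1)^2 * card (Rab m (fst p) (snd p))" using c by (simp add: f_def)
  then show ?thesis by (metis of_nat_le_iff of_nat_mult)
qed

lemma Rab_swp: "card (Rab m A B) \<le> card (Rab m B A)"
proof (rule card_inj_on_le[OF _ _ finite_Rab])
  show "inj_on swp (Rab m A B)" by (rule inj_onI) (metis swp_swp)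
  show "swp ` Rab m A B \<subseteq> Rab m B A"
  proof
    fix v assume "v \<in> swp ` Rab m A B"
    then obtain w where w: "w \<in> Rab m A B" "v = swp w" by auto
    then have s: "saw m w" and "Hx w" "Exx w" "Hy w" "Ey w" "w!m = (A,B)" by (auto simp: Rab_def Rect_def)
    moreover have "length w = m+1" using s by (simp add: saw_def)
    ultimately show "v \<in> Rab m B A" using w
      by (simp add: Rab_def Rect_def swp_saw swp_props)
  qed
qed

lemma a_ge: assumes "m \<ge> 1"
  shows "real (card (Rab m A B)) ^ 2 \<le> real (a_num (2*m))"
proof -
  have "card (Rab m A B) * card (Rab m A B) \<le> card (Rab m A B) * card (Rab m B A)"
    using Rab_swp by simp
  also have "\<dots> = card (Rab m A B \<times> Rab m B A)" by (simp add: card_cartesian_product)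
  also have "\<dots> \<le> a_num (2*m)" unfolding a_num_def
  proof (rule card_inj_on_le[OF cat_inj[OF assms] _ finite_sq])
    show "(\<lambda>(w, v). cat m w v) ` (Rab m A B \<times> Rab m B A) \<subseteq> {w. squared_walk (2 * m) w}"
      using cat_sq[OF assms] by auto
  qed
  finally show ?thesis by (metis of_nat_le_iff of_nat_mult power2_eq_square)
qed

lemma final_bound: assumes m: "m \<ge> 1"
  shows "Fb m ^ 8 * (real (m+1))^4 \<le> exp (64 * sqrt (real (2*m)))"
proof -
  define t where "t = sqrt (real (2*m))"
  have t1: "t \<ge> 1" using m by (simp add: t_def)
  have tt: "t*t = 2 * real m" by (simp add: t_def)
  have a: "real m + 1 \<le> exp (2*t)" and b: "2 * real m + 1 \<le> exp (2*t)"
  proof -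
    have "2 * real m + 1 \<le> (1+t)^2" using tt t1 by (simp add: power2_eq_square algebra_simps)
    also have "\<dots> \<le> exp t ^ 2" using t1 by (intro power_mono exp_ge_add_one_self) auto
    also have "\<dots> = exp (2*t)" by (simp add: exp_double[symmetric] power2_eq_square exp_add[symmetric])
    finally show "2 * real m + 1 \<le> exp (2*t)" .
    then show "real m + 1 \<le> exp (2*t)" by simp
  qed
  have s: "sqrt (real m + 1) \<le> t" unfolding t_def using m by (intro real_sqrt_le_mono) simp
  have "Fb m = (real m + 1) * (2 * real m + 1) * exp (2 * sqrt (real m + 1) + 1)"
    by (simp add: Fb_def algebra_simps)
  also have "\<dots> \<le> exp (2*t) * exp (2*t) * exp (3*t)"
    using a b s t1 by (intro mult_mono) auto
  also have "\<dots> = exp (7*t)" by (simp add: exp_add[symmetric])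
  finally have F: "Fb m \<le> exp (7*t)" .
  have "Fb m ^ 8 * (real (m+1))^4 \<le> exp (7*t) ^ 8 * exp (2*t) ^ 4"
    using F a Fb_pos[of m] by (intro mult_mono power_mono) auto
  also have "\<dots> = exp (64*t)" by (simp add: exp_of_nat_mult[symmetric] exp_add[symmetric])
  finally show ?thesis by (simp add: t_def)
qed

theorem lemma5:
  shows "\<exists>c::real. c > 0 \<and> (\<forall>n::nat. even n \<longrightarrow>
           real (a_num n) \<ge> conn_const ^ n * exp (- c * sqrt (real n)))"
proof (intro exI[of _ 64] conjI allI impI)
  show "(64::real) > 0" by simp
next
  fix n :: nat assume "even n"
  then obtain m where n: "n = 2*m" by (auto elim: evenE)
  show "real (a_num n) \<ge> conn_const ^ n * exp (- 64 * sqrt (real n))"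
  proof (cases "m = 0")
    case True
    have "squared_walk 0 [(0,0)]" by (auto simp: squared_walk_def saw_def)
    then have "a_num 0 \<ge> 1" unfolding a_num_def using finite_sq[of 0]
      by (metis (mono_tags, lifting) One_nat_def Suc_leI card_gt_0_iff empty_iff mem_Collect_eq)
    then show ?thesis using True n by simp
  next
    case False
    then have m: "m \<ge> 1" by simp
    define mu where "mu = conn_const"
    have mu1: "mu \<ge> 1" using mu_ge by (simp add: mu_def)
    obtain A B where AB: "real (card (Rect m)) \<le> real ((m+1)^2) * real (card (Rab m A B))"
      using pigeon by blast
    define X where "X = real (card (Rab m A B))"
    define F where "F = Fb m"
    have F0: "F > 0" using Fb_pos by (simp add: F_def)
    have q0: "real ((m+1)^2) > 0" by simp
    have "mu ^ m \<le> real (c_num m)" using mu_le[OF m] by (simp add: mu_def)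
    also have "\<dots> \<le> F ^ 4 * real (card (Rect m))" using chain by (simp add: F_def)
    also have "\<dots> \<le> F ^ 4 * (real ((m+1)^2) * X)" using AB F0 by (simp add: X_def)
    finally have h: "mu ^ m \<le> F^4 * real ((m+1)^2) * X" by (simp add: mult.assoc)
    have X0: "X \<ge> 0" by (simp add: X_def)
    have "(mu ^ m)^2 \<le> (F^4 * real ((m+1)^2) * X)^2"
      using h mu1 by (intro power_mono) auto
    also have "\<dots> = (F^8 * (real (m+1))^4) * X^2"
      by (simp add: power_mult_distrib flip: power_mult)
    finally have h2: "mu ^ n \<le> (F^8 * (real (m+1))^4) * X^2"
      using n by (simp add: power_mult[symmetric] mult.commute)
    have G: "F^8 * (real (m+1))^4 \<le> exp (64 * sqrt (real n))"
      using final_bound[OF m] n by (simp add: F_def)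
    have "mu ^ n * exp (- 64 * sqrt (real n)) \<le> (F^8 * (real (m+1))^4) * X^2 * exp (- 64 * sqrt (real n))"
      using h2 by (intro mult_right_mono) auto
    also have "\<dots> \<le> exp (64 * sqrt (real n)) * X^2 * exp (- 64 * sqrt (real n))"
      using G X0 by (intro mult_right_mono) auto
    also have "\<dots> = X^2" by (simp add: exp_minus field_simps)
    also have "\<dots> \<le> real (a_num n)" using a_ge[OF m] n by (simp add: X_def)
    finally show ?thesis by (simp add: mu_def)
  qed
qed


end
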